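(* Let $L$ be an oriented, ordered, compatible virtual link diagram with components $L_1,\dots,L_n$, and let $C$ be an affine bilabeling of $L$. Then the multi-variable affine index polynomial $$p_{(L,C)}(t_1,\dots,t_n)=\sum_{c}\operatorname{sgn}(c)\bigl(t_{o(c)}^{W(c)}-1\bigr)$$ is an invariant of the pair $(L,C)$: it is unchanged under classical and virtual Reidemeister moves, where the bilabeling is carried along, i.e. labels on arcs outside the local disc of the move are unchanged. Moreover, this invariant generalizes the earlier affine index polynomials. (i) For every $i$, collapse the starting bilabel of $L_i$ to the single label $A_i=a^{(i)}_1+a^{(i)}_2$ and form Kauffman's compatible-link affine index polynomial $P_L(t)$ from it. Then substituting $t_1=\dots=t_n=t$ gives $p_{(L,C)}(t,\dots,t)=P_L(t)$. (ii) If $n=1$, so that $L=K$ is a virtual knot, then $p_{(K,C)}(t)$ equals the Affine Index Polynomial $P_K(t)$.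
   Context: **Diagrams.** A virtual link diagram is an oriented planar diagram of ordered closed curves $L_1,\dots,L_n$, called components. Its crossings are either classical (with over/under information) or virtual. Diagrams are considered up to the classical and virtual Reidemeister moves. **Crossing conventions.** Draw a classical crossing with both strands oriented upward. - The strand running from bottom-left to top-right has index change $-1$; the strand running from bottom-right to top-left has index change $+1$. - The crossing is positive ($\operatorname{sgn}=+1$) if the overstrand is the bottom-left-to-top-right strand, and negative otherwise. - A classical crossing is a self-crossing if both strands lie on the same component, and external otherwise. - For each component $L_i$, its weight $n_i$ is the sum of the index changes of $L_i$ over all its passages through external classical crossings (its algebraic intersection number with the other components). - $L$ is compatible if $n_i=0$ for all $i$. **Affine bilabeling $C$.** - For each component $L_i$, choose a starting point on it and give it a bilabel $(a^{(i)}_1,a^{(i)}_2)$ of formal integer variables, distinct for different components. - Travel along $L_i$ in its orientation and carry the bilabel along the arcs. It is unchanged at virtual crossings. - On passing through a classical crossing with index change $\varepsilon$, the first entry changes by $\varepsilon$ if the crossing is a self-crossing, and the second entry changes by $\varepsilon$ if it is external. - For compatible $L$, the labels close up consistently. **Crossing weight $W(c)$.** For a bilabel $(x,y)$, put $|(x,y)|=x+y$. Draw $c$ with both strands upward. - If $c$ is positive, $W(c)=|\text{bottom-left label}|-|\text{top-left label}|$. - If $c$ is negative, $W(c)=|\text{bottom-right label}|-|\text{top-right label}|$. **The polynomial.** $o(c)$ denotes the index of the component containing the overstrand of $c$. The sum defining $p_{(L,C)}$ runs over all classical crossings; exponents are integer linear combinations of the variables. Equivalently, $p_{(L,C)}=\sum_c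 \operatorname{sgn}(c)\,t_{o(c)}^{W(c)}-\mathrm{writhe}(L)$. **Kauffman's affine labeling and $P_L(t)$.** - Give each component a single starting label and propagate it by adding the index change at every classical crossing, both self and external. - Weights: for positive $c$, $W(c)=(\text{bottom-left})-(\text{top-left})$; for negative $c$, $W(c)=(\text{bottom-right})-(\text{top-right})$. - $P_L(t)=\sum_c\operatorname{sgn}(c)(t^{W(c)}-1)$. - For a virtual knot $K$, this polynomial is independent of the starting label and is the Affine Index Polynomial $P_K(t)$. *)

theory Defs
  imports Main "HOL-Library.Function_Algebras" "HOL-Library.Product_Plus"
begin

text \<open>Virtual link diagrams are modelled by their Gauss diagrams (Gauss codes):
virtual crossings are not recorded, so virtual Reidemeister moves act trivially.
Component i (i < length (comps D)) is the list of its passages through classical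
crossings, read along the orientation starting at the chosen base point.
A passage is a pair (crossing name, True if it is the overstrand).\<close>

record gd =
  sg    :: "nat \<Rightarrow> int"
  comps :: "(nat \<times> bool) list list"

definition crossings :: "gd \<Rightarrow> nat set" where
  "crossings D = fst ` set (concat (comps D))"

definition wf_gd :: "gd \<Rightarrow> bool" where
  "wf_gd D \<longleftrightarrow> (\<forall>c \<in> crossings D.
      count_list (concat (comps D)) (c, True) = 1 \<and>
      count_list (concat (comps D)) (c, False) = 1 \<and>
      sg D c \<in> {1, -1})"

definition pos :: "gd \<Rightarrow> nat \<times> bool \<Rightarrow> nat \<times> nat" where
  "pos D p = (SOME ij. fst ij < length (comps D) \<and> snd ij < length (comps D ! fst ij)
                       \<and> comps D ! fst ij ! snd ij = p)"

definition comp_of :: "gd \<Rightarrow> nat \<times> bool \<Rightarrow> nat" where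
  "comp_of D p = fst (pos D p)"

definition is_self :: "gd \<Rightarrow> nat \<Rightarrow> bool" where
  "is_self D c \<longleftrightarrow> comp_of D (c, True) = comp_of D (c, False)"

text \<open>Index change of a passage: with both strands upward, the bottom-left to top-right
strand has change -1 and the other +1; at a positive crossing the over strand is the
bottom-left to top-right one.\<close>
definition ichg :: "gd \<Rightarrow> nat \<times> bool \<Rightarrow> int" where
  "ichg D p = (if snd p then - sg D (fst p) else sg D (fst p))"

definition comp_weight :: "gd \<Rightarrow> nat \<Rightarrow> int" where
  "comp_weight D i = sum_list (map (\<lambda>p. if is_self D (fst p) then 0 else ichg D p) (comps D ! i))"

definition compatible :: "gd \<Rightarrow> bool" where
  "compatible D \<longleftrightarrow> (\<forall>i < length (comps D). comp_weight D i = 0)"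

text \<open>Affine integer expressions in formal variables of type 'v:
(coefficient function, constant).\<close>
type_synonym 'v aff = "('v \<Rightarrow> int) \<times> int"

definition avar :: "'v \<Rightarrow> 'v aff" where
  "avar v = ((\<lambda>w. if w = v then 1 else 0), 0)"

definition aconst :: "int \<Rightarrow> 'v aff" where
  "aconst k = (0, k)"

text \<open>Affine bilabeling: the starting bilabel of component i is (a(i,1), a(i,2)).\<close>
definition bilabel :: "gd \<Rightarrow> nat \<Rightarrow> nat \<Rightarrow> (nat \<times> nat) aff \<times> (nat \<times> nat) aff" where
  "bilabel D i j =
     (avar (i, 1) + aconst (sum_list (map (\<lambda>p. if is_self D (fst p) then ichg D p else 0)
                                         (take j (comps D ! i)))),
      avar (i, 2) + aconst (sum_list (map (\<lambda>p. if is_self D (fst p) then 0 else ichg D p)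
                                         (take j (comps D ! i)))))"

definition babs :: "'v aff \<times> 'v aff \<Rightarrow> 'v aff" where
  "babs l = fst l + snd l"

text \<open>W(c): |incoming label of the overstrand| - |outgoing label of the understrand|
(= bottom-left minus top-left for positive, bottom-right minus top-right for negative).\<close>
definition cweight :: "gd \<Rightarrow> nat \<Rightarrow> (nat \<times> nat) aff" where
  "cweight D c = (let (i, j) = pos D (c, True); (i', j') = pos D (c, False)
                  in babs (bilabel D i j) - babs (bilabel D i' (Suc j')))"

definition over_comp :: "gd \<Rightarrow> nat \<Rightarrow> nat" where
  "over_comp D c = comp_of D (c, True)"

text \<open>Monomials t_k^e of the multivariable polynomial; all t_k^0 are identified with 1 (None).\<close>
type_synonym 'v mono = "(nat \<times> 'v aff) option"

definition mono :: "nat \<Rightarrow> 'v aff \<Rightarrow> 'v mono" where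
  "mono k e = (if e = 0 then None else Some (k, e))"

definition mvaip :: "gd \<Rightarrow> (nat \<times> nat) mono \<Rightarrow> int" where
  "mvaip D = (\<lambda>m. \<Sum>c \<in> crossings D. sg D c *
       ((if m = mono (over_comp D c) (cweight D c) then 1 else 0) - (if m = None then 1 else 0)))"

text \<open>Substitution t_1 = ... = t_n = t: coefficient of t^e.\<close>
definition mono_exp :: "'v mono \<Rightarrow> 'v aff" where
  "mono_exp m = (case m of None \<Rightarrow> 0 | Some (k, e) \<Rightarrow> e)"

definition specialize :: "('v mono \<Rightarrow> int) \<Rightarrow> 'v aff \<Rightarrow> int" where
  "specialize P e = (\<Sum>m \<in> {m. P m \<noteq> 0 \<and> mono_exp m = e}. P m)"

text \<open>Kauffman's affine labeling with starting labels st i, and P_L(t) (coefficient of t^e).\<close>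
definition klabel :: "gd \<Rightarrow> (nat \<Rightarrow> 'v aff) \<Rightarrow> nat \<Rightarrow> nat \<Rightarrow> 'v aff" where
  "klabel D st i j = st i + aconst (sum_list (map (ichg D) (take j (comps D ! i))))"

definition kweight :: "gd \<Rightarrow> (nat \<Rightarrow> 'v aff) \<Rightarrow> nat \<Rightarrow> 'v aff" where
  "kweight D st c = (let (i, j) = pos D (c, True); (i', j') = pos D (c, False)
                     in klabel D st i j - klabel D st i' (Suc j'))"

definition kauffman_P :: "gd \<Rightarrow> (nat \<Rightarrow> 'v aff) \<Rightarrow> 'v aff \<Rightarrow> int" where
  "kauffman_P D st = (\<lambda>e. \<Sum>c \<in> crossings D. sg D c *
       ((if e = kweight D st c then 1 else 0) - (if e = 0 then 1 else 0)))"

text \<open>Reidemeister moves on Gauss diagrams, performed away from the base points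
(so the bilabeling is carried along).\<close>
definition delete_crossings :: "nat set \<Rightarrow> gd \<Rightarrow> gd" where
  "delete_crossings S D = D\<lparr>comps := map (filter (\<lambda>p. fst p \<notin> S)) (comps D)\<rparr>"

definition adjacent :: "gd \<Rightarrow> nat \<times> bool \<Rightarrow> nat \<times> bool \<Rightarrow> bool" where
  "adjacent D p q \<longleftrightarrow> (\<exists>i u v. i < length (comps D) \<and> comps D ! i = u @ [p, q] @ v)"

definition R1_remove :: "gd \<Rightarrow> gd \<Rightarrow> bool" where
  "R1_remove D D' \<longleftrightarrow> wf_gd D \<and>
     (\<exists>c b. adjacent D (c, b) (c, \<not> b) \<and> D' = delete_crossings {c} D)"

definition R2_remove :: "gd \<Rightarrow> gd \<Rightarrow> bool" where
  "R2_remove D D' \<longleftrightarrow> wf_gd D \<and>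
     (\<exists>c d. c \<noteq> d \<and> sg D c = - sg D d \<and> adjacent D (c, True) (d, True) \<and>
        (adjacent D (c, False) (d, False) \<or> adjacent D (d, False) (c, False)) \<and>
        D' = delete_crossings {c, d} D)"

fun swap_adj :: "'a \<Rightarrow> 'a \<Rightarrow> 'a list \<Rightarrow> 'a list" where
  "swap_adj p q (x # y # zs) = (if x = p \<and> y = q then q # p # zs else x # swap_adj p q (y # zs))"
| "swap_adj p q xs = xs"

definition ord_sign :: "gd \<Rightarrow> nat \<times> bool \<Rightarrow> nat \<times> bool \<Rightarrow> int" where
  "ord_sign D p q = (if adjacent D p q then 1 else -1)"

text \<open>R3: crossings x (top over middle), y (top over bottom), z (middle over bottom);
on each strand the two passages are adjacent and get swapped.  The realizability
condition: there is s = +-1 with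
 [x before y on top] = s sgn z, [z before x on middle] = -s sgn y,
 [y before z on bottom] = s sgn x.\<close>
definition R3 :: "gd \<Rightarrow> gd \<Rightarrow> bool" where
  "R3 D D' \<longleftrightarrow> wf_gd D \<and>
     (\<exists>x y z. distinct [x, y, z] \<and>
        (adjacent D (x, True) (y, True) \<or> adjacent D (y, True) (x, True)) \<and>
        (adjacent D (z, True) (x, False) \<or> adjacent D (x, False) (z, True)) \<and>
        (adjacent D (y, False) (z, False) \<or> adjacent D (z, False) (y, False)) \<and>
        (\<exists>s \<in> {1, -1::int}.
           ord_sign D (x, True) (y, True) = s * sg D z \<and>
           ord_sign D (z, True) (x, False) = - s * sg D y \<and>
           ord_sign D (y, False) (z, False) = s * sg D x) \<and>
        D' = D\<lparr>comps := map (\<lambda>l.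
               let l1 = (if adjacent D (x, True) (y, True) then swap_adj (x, True) (y, True) l
                         else swap_adj (y, True) (x, True) l);
                   l2 = (if adjacent D (z, True) (x, False) then swap_adj (z, True) (x, False) l1
                         else swap_adj (x, False) (z, True) l1)
               in (if adjacent D (y, False) (z, False) then swap_adj (y, False) (z, False) l2
                   else swap_adj (z, False) (y, False) l2)) (comps D)\<rparr>)"

definition reid_move :: "gd \<Rightarrow> gd \<Rightarrow> bool" where
  "reid_move D D' \<longleftrightarrow> R1_remove D D' \<or> R1_remove D' D \<or> R2_remove D D' \<or> R2_remove D' D
                      \<or> R3 D D' \<or> R3 D' D"

end

theory Submission
  imports Defs
begin


definition ci :: "'a list list \<Rightarrow> 'a \<Rightarrow> nat" where
  "ci Ls p = (THE i. i < length Ls \<and> p \<in> set (Ls!i))"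

definition pr :: "('a \<Rightarrow> int) \<Rightarrow> 'a list list \<Rightarrow> 'a \<Rightarrow> int" where
  "pr f Ls p = sum_list (map f (takeWhile (\<lambda>q. q \<noteq> p) (Ls ! ci Ls p)))"

definition adjL :: "'a list list \<Rightarrow> 'a \<Rightarrow> 'a \<Rightarrow> bool" where
  "adjL Ls p q \<longleftrightarrow> (\<exists>i u v. i < length Ls \<and> Ls ! i = u @ [p, q] @ v)"

lemma dc_idx:
  "distinct (concat Ls) \<Longrightarrow> i < length Ls \<Longrightarrow> k < length Ls \<Longrightarrow> x \<in> set (Ls!i)
   \<Longrightarrow> x \<in> set (Ls!k) \<Longrightarrow> i = k"
proof (induction Ls arbitrary: i k)
  case Nil then show ?case by simp
next
  case (Cons l Ls)
  then show ?case
    by (cases i; cases k) (auto simp: nth_Cons dest!: nth_mem)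
qed

lemma dc_nth:
  "distinct (concat Ls) \<Longrightarrow> i < length Ls \<Longrightarrow> distinct (Ls!i)"
proof (induction Ls arbitrary: i)
  case Nil then show ?case by simp
next
  case (Cons l Ls)
  then show ?case by (cases i) auto
qed

lemma ci_eq:
  assumes "distinct (concat Ls)" "i < length Ls" "p \<in> set (Ls!i)"
  shows "ci Ls p = i"
  unfolding ci_def
  using assms dc_idx[OF assms(1)] by (intro the_equality) auto

lemma ci_cong:
  assumes "length Ls' = length Ls" "\<And>k. k < length Ls \<Longrightarrow> set (Ls'!k) = set (Ls!k)"
  shows "ci Ls' p = ci Ls p"
proof -
  have "(\<lambda>i. i < length Ls' \<and> p \<in> set (Ls'!i)) = (\<lambda>i. i < length Ls \<and> p \<in> set (Ls!i))"
    using assms by auto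
  then show ?thesis unfolding ci_def by simp
qed

lemma in_concat_nth:
  "p \<in> set (concat Ls) \<Longrightarrow> \<exists>k < length Ls. p \<in> set (Ls!k)"
  by (auto simp: set_concat) (metis in_set_conv_nth)

lemma tw_notin: "p \<notin> set u \<Longrightarrow> takeWhile (\<lambda>q. q \<noteq> p) (u @ r) = u @ takeWhile (\<lambda>q. q \<noteq> p) r"
  by (induct u) auto

lemma tw_in: "p \<in> set u \<Longrightarrow> takeWhile (\<lambda>q. q \<noteq> p) (u @ r) = takeWhile (\<lambda>q. q \<noteq> p) u"
  by (induct u) auto

lemma pr_at:
  assumes "distinct (concat Ls)" "i < length Ls" "p \<in> set (Ls!i)"
  shows "pr f Ls p = sum_list (map f (takeWhile (\<lambda>q. q \<noteq> p) (Ls ! i)))"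
  using ci_eq[OF assms] by (simp add: pr_def)

lemma distinct_concat_upd:
  assumes "distinct (concat Ls)" "i < length Ls" "distinct x" "set x \<subseteq> set (Ls!i)"
  shows "distinct (concat (Ls[i:=x]))"
proof -
  have e1: "concat Ls = concat (take i Ls) @ Ls!i @ concat (drop (Suc i) Ls)"
    using id_take_nth_drop[OF assms(2)] by (metis concat.simps(2) concat_append)
  have e2: "concat (Ls[i:=x]) = concat (take i Ls) @ x @ concat (drop (Suc i) Ls)"
    using upd_conv_take_nth_drop[OF assms(2)] by simp
  show ?thesis using assms(1,3,4) unfolding e1 e2 by (auto simp: distinct_append)
qed

lemma pr_pair:
  assumes "distinct (concat Ls)" "i < length Ls" "Ls!i = u @ [a,b] @ v"
  shows "ci Ls a = i" "ci Ls b = i" "pr f Ls a = sum_list (map f u)"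
        "pr f Ls b = sum_list (map f u) + f a"
proof -
  have d: "distinct (Ls!i)" using dc_nth assms by blast
  then have "a \<notin> set u" "b \<notin> set u" "a \<noteq> b" using assms(3) by auto
  then show "ci Ls a = i" "ci Ls b = i" "pr f Ls a = sum_list (map f u)"
        "pr f Ls b = sum_list (map f u) + f a"
    using ci_eq[OF assms(1,2)] pr_at[OF assms(1,2)] assms(3) by (auto simp: tw_notin)
qed

lemma repl:
  assumes dL: "distinct (concat Ls)" and dL': "distinct (concat Ls')" and i: "i < length Ls"
    and e: "Ls!i = u @ w0 @ v" and e': "Ls' = Ls[i := u @ w @ v]"
    and s: "sum_list (map f w) = sum_list (map f w0)"
    and p: "p \<in> set (concat Ls')" "p \<notin> set w"
  shows "ci Ls' p = ci Ls p \<and> pr f Ls' p = pr f Ls p"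
proof -
  obtain k where k: "k < length Ls'" "p \<in> set (Ls'!k)" using in_concat_nth[OF p(1)] by blast
  have lk: "k < length Ls" using k e' by simp
  have ck': "ci Ls' p = k" using ci_eq[OF dL' k] .
  show ?thesis
  proof (cases "k = i")
    case False
    then have "Ls'!k = Ls!k" using e' by simp
    then show ?thesis using ck' ci_eq[OF dL lk] k pr_at[OF dL' k, of f] pr_at[OF dL lk, of p f] by simp
  next
    case True
    have d: "distinct (Ls!i)" using dc_nth dL i by blast
    have d'0: "distinct (Ls'!i)" by (rule dc_nth[OF dL']) (simp add: e' i)
    then have d': "distinct (u @ w @ v)" using e' i by simp
    have pi': "p \<in> set (u @ w @ v)" using k True e' i by simp
    then have uv: "p \<in> set u \<or> p \<in> set v" using p(2) by auto
    have pi: "p \<in> set (Ls!i)" using uv e by auto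
    have c: "ci Ls p = i" using ci_eq[OF dL i pi] .
    have tw: "takeWhile (\<lambda>q. q \<noteq> p) (Ls'!i) = takeWhile (\<lambda>q. q \<noteq> p) (Ls!i)
       \<or> (takeWhile (\<lambda>q. q \<noteq> p) (Ls'!i) = u @ w @ takeWhile (\<lambda>q. q \<noteq> p) v \<and>
          takeWhile (\<lambda>q. q \<noteq> p) (Ls!i) = u @ w0 @ takeWhile (\<lambda>q. q \<noteq> p) v)"
    proof (cases "p \<in> set u")
      case True
      then show ?thesis using e e' i by (simp add: tw_in)
    next
      case False
      then have "p \<in> set v" using uv by simp
      then have "p \<notin> set w" "p \<notin> set w0" "p \<notin> set u" using d d' e e' i p(2) False by auto
      then show ?thesis using e e' i by (simp add: tw_notin)
    qed
    have "pr f Ls' p = sum_list (map f (takeWhile (\<lambda>q. q \<noteq> p) (Ls'!i)))"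
      using pr_at[OF dL'] k True by simp
    also have "\<dots> = sum_list (map f (takeWhile (\<lambda>q. q \<noteq> p) (Ls!i)))"
      using tw s by auto
    also have "\<dots> = pr f Ls p" using pr_at[OF dL i pi] by simp
    finally show ?thesis using ck' c True by simp
  qed
qed



lemma swap_notin: "p \<notin> set l \<Longrightarrow> swap_adj p q l = l"
  by (induct p q l rule: swap_adj.induct) auto

lemma swap_at: "p \<notin> set u \<Longrightarrow> swap_adj p q (u @ [p,q] @ v) = u @ [q,p] @ v"
proof (induct u)
  case Nil then show ?case by simp
next
  case (Cons x u)
  then show ?case by (cases u) auto
qed

lemma map_swap:
  assumes "distinct (concat Ls)" "i < length Ls" "Ls!i = u @ [a,b] @ v"
  shows "map (swap_adj a b) Ls = Ls[i := u @ [b,a] @ v]"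
proof (rule nth_equalityI)
  fix k assume k: "k < length (map (swap_adj a b) Ls)"
  have d: "distinct (Ls!i)" using dc_nth assms by blast
  show "map (swap_adj a b) Ls ! k = Ls[i := u @ [b, a] @ v] ! k"
  proof (cases "k = i")
    case True then show ?thesis using assms d swap_at[of a u b v] by simp
  next
    case False
    have "a \<notin> set (Ls!k)" using dc_idx[OF assms(1) assms(2), of k a] k False assms(3) by auto
    then show ?thesis using False k swap_notin by simp
  qed
qed simp

lemma map_del:
  assumes "distinct (concat Ls)" "i < length Ls" "Ls!i = u @ [a,b] @ v"
  shows "map (filter (\<lambda>q. q \<notin> {a,b})) Ls = Ls[i := u @ v]"
proof (rule nth_equalityI)
  fix k assume k: "k < length (map (filter (\<lambda>q. q \<notin> {a,b})) Ls)"
  have d: "distinct (Ls!i)" using dc_nth assms by blast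
  show "map (filter (\<lambda>q. q \<notin> {a,b})) Ls ! k = Ls[i := u @ v] ! k"
  proof (cases "k = i")
    case True
    have "filter (\<lambda>q. q \<notin> {a,b}) u = u" "filter (\<lambda>q. q \<notin> {a,b}) v = v"
      using d assms(3) by (auto intro!: filter_True)
    then show ?thesis using assms True by simp
  next
    case False
    have "a \<notin> set (Ls!k)" "b \<notin> set (Ls!k)"
      using dc_idx[OF assms(1) assms(2), of k] k False assms(3) by auto
    then have "filter (\<lambda>q. q \<notin> {a,b}) (Ls!k) = Ls!k" by (auto intro!: filter_True)
    then show ?thesis using False k by simp
  qed
qed simp

lemma set_concat_upd:
  assumes "i < length Ls" "set x = set (Ls!i)"
  shows "set (concat (Ls[i:=x])) = set (concat Ls)"
proof -
  have e1: "concat Ls = concat (take i Ls) @ Ls!i @ concat (drop (Suc i) Ls)"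
    using id_take_nth_drop[OF assms(1)] by (metis concat.simps(2) concat_append)
  have e2: "concat (Ls[i:=x]) = concat (take i Ls) @ x @ concat (drop (Suc i) Ls)"
    using upd_conv_take_nth_drop[OF assms(1)] by simp
  show ?thesis using assms(2) unfolding e1 e2 by auto
qed

lemma adj_nth: "(\<exists>u v. l = u @ [p,q] @ v) \<longleftrightarrow> (\<exists>j. Suc j < length l \<and> l!j = p \<and> l!Suc j = q)"
proof
  assume "\<exists>u v. l = u @ [p,q] @ v"
  then obtain u v where "l = u @ [p,q] @ v" by blast
  then show "\<exists>j. Suc j < length l \<and> l!j = p \<and> l!Suc j = q"
    by (intro exI[of _ "length u"]) (auto simp: nth_append)
next
  assume "\<exists>j. Suc j < length l \<and> l!j = p \<and> l!Suc j = q"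
  then obtain j where j: "Suc j < length l" "l!j = p" "l!Suc j = q" by blast
  have "l = take j l @ l!j # drop (Suc j) l" by (rule id_take_nth_drop) (use j(1) in simp)
  moreover have "drop (Suc j) l = l!Suc j # drop (Suc (Suc j)) l"
    using j(1) by (simp add: Cons_nth_drop_Suc)
  ultimately have "l = take j l @ [p,q] @ drop (Suc (Suc j)) l" using j by simp
  then show "\<exists>u v. l = u @ [p,q] @ v" by blast
qed

lemma swap_nth: "j \<noteq> length u \<Longrightarrow> j \<noteq> Suc (length u) \<Longrightarrow> (u @ [b,a] @ v) ! j = (u @ [a,b] @ v) ! j"
  by (auto simp: nth_append nth_Cons split: nat.split)

lemma adj_swap_keep:
  assumes "u @ [a,b] @ v = u0 @ [q,r] @ v0" "q \<notin> {a,b}" "r \<notin> {a,b}"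
  shows "\<exists>u1 v1. u @ [b,a] @ v = u1 @ [q,r] @ v1"
proof -
  let ?l = "u @ [a,b] @ v"
  obtain j where j: "Suc j < length ?l" "?l!j = q" "?l!Suc j = r"
    using adj_nth[of ?l q r] assms(1) by metis
  have a: "?l ! length u = a" "?l ! Suc (length u) = b" by (auto simp: nth_append)
  have "j \<noteq> length u" "j \<noteq> Suc (length u)" "Suc j \<noteq> length u" "Suc j \<noteq> Suc (length u)"
    using j a assms(2,3) by auto
  then have "(u @ [b,a] @ v) ! j = q" "(u @ [b,a] @ v) ! Suc j = r" "Suc j < length (u @ [b,a] @ v)"
    using swap_nth[of j u b a v] swap_nth[of "Suc j" u b a v] j by (auto simp del: append.simps)
  then show ?thesis using adj_nth by metis
qed



lemma swap_step:
  assumes d: "distinct (concat Ls)" and ad: "adjL Ls a b"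
  defines "Ls' \<equiv> map (swap_adj a b) Ls"
  shows "distinct (concat Ls')" "set (concat Ls') = set (concat Ls)" "ci Ls' = ci Ls"
    "length Ls' = length Ls"
    "\<And>p. p \<in> set (concat Ls) \<Longrightarrow>
        pr f Ls' p = pr f Ls p + (if p = a then f b else if p = b then - f a else 0)"
    "\<And>q r. adjL Ls q r \<Longrightarrow> q \<notin> {a,b} \<Longrightarrow> r \<notin> {a,b} \<Longrightarrow> adjL Ls' q r"
proof -
  obtain i u v where i: "i < length Ls" "Ls!i = u @ [a,b] @ v" using ad unfolding adjL_def by blast
  have e: "Ls' = Ls[i := u @ [b,a] @ v]" unfolding Ls'_def using map_swap[OF d i] .
  have di: "distinct (Ls!i)" using dc_nth d i by blast
  have dx: "distinct (u @ [b,a] @ v)" using di i by auto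
  have sx: "set (u @ [b,a] @ v) = set (Ls!i)" using i by auto
  have sx': "set (u @ [b,a] @ v) \<subseteq> set (Ls!i)" using sx by simp
  show d': "distinct (concat Ls')" unfolding e using distinct_concat_upd[OF d i(1) dx sx'] .
  show "set (concat Ls') = set (concat Ls)" unfolding e using set_concat_upd[OF i(1) sx] .
  show l: "length Ls' = length Ls" unfolding e by simp
  show "ci Ls' = ci Ls"
  proof
    fix p show "ci Ls' p = ci Ls p"
    proof (rule ci_cong)
      show "length Ls' = length Ls" by (rule l)
      fix k assume "k < length Ls"
      then show "set (Ls'!k) = set (Ls!k)"
        using sx i(1) unfolding e by (cases "k = i") auto
    qed
  qed
  have i': "i < length Ls'" "Ls'!i = u @ [b,a] @ v" using i e by auto
  show "pr f Ls' p = pr f Ls p + (if p = a then f b else if p = b then - f a else 0)"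
    if p: "p \<in> set (concat Ls)" for p
  proof (cases "p = a \<or> p = b")
    case True
    then show ?thesis using pr_pair(3,4)[OF d i, of f] pr_pair(3,4)[OF d' i', of f] di i by auto
  next
    case False
    have p': "p \<in> set (concat Ls')" using p \<open>set (concat Ls') = set (concat Ls)\<close> by simp
    have "ci Ls' p = ci Ls p \<and> pr f Ls' p = pr f Ls p"
      by (rule repl[OF d d' i(1) _ e, of "[a,b]" f]) (use i(2) p' False in auto)
    then show ?thesis using False by simp
  qed
  show "adjL Ls' q r" if h: "adjL Ls q r" "q \<notin> {a,b}" "r \<notin> {a,b}" for q r
  proof -
    obtain k u0 v0 where k: "k < length Ls" "Ls!k = u0 @ [q,r] @ v0"
      using h(1) unfolding adjL_def by blast
    show ?thesis
    proof (cases "k = i")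
      case True
      then obtain u1 v1 where "u @ [b,a] @ v = u1 @ [q,r] @ v1"
        using adj_swap_keep[of u a b v u0 q r v0] k i h(2,3) by auto
      then show ?thesis unfolding adjL_def using i' by metis
    next
      case False
      then have "Ls'!k = u0 @ [q,r] @ v0" unfolding e using k by simp
      then show ?thesis unfolding adjL_def using k l by metis
    qed
  qed
qed

lemma del_step:
  assumes d: "distinct (concat Ls)" and ad: "adjL Ls a b" and s: "f a + f b = 0"
  defines "Ls' \<equiv> map (filter (\<lambda>q. q \<notin> {a,b})) Ls"
  shows "distinct (concat Ls')" "set (concat Ls') = set (concat Ls) - {a,b}"
    "length Ls' = length Ls"
    "\<And>p. p \<in> set (concat Ls') \<Longrightarrow> ci Ls' p = ci Ls p \<and> pr f Ls' p = pr f Ls p"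
    "\<And>q r. adjL Ls q r \<Longrightarrow> q \<notin> {a,b} \<Longrightarrow> r \<notin> {a,b} \<Longrightarrow> adjL Ls' q r"
proof -
  obtain i u v where i: "i < length Ls" "Ls!i = u @ [a,b] @ v" using ad unfolding adjL_def by blast
  have e: "Ls' = Ls[i := u @ v]" unfolding Ls'_def using map_del[OF d i] .
  have c: "concat Ls' = filter (\<lambda>q. q \<notin> {a,b}) (concat Ls)" unfolding Ls'_def by (simp add: filter_concat)
  show d': "distinct (concat Ls')" unfolding c using d by simp
  show "set (concat Ls') = set (concat Ls) - {a,b}" unfolding c by auto
  show "length Ls' = length Ls" unfolding Ls'_def by simp
  show "ci Ls' p = ci Ls p \<and> pr f Ls' p = pr f Ls p" if p: "p \<in> set (concat Ls')" for p
    by (rule repl[OF d d' i(1) _ _, of u "[a,b]" v "[]" f]) (use i(2) p e s in auto)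
  show "adjL Ls' q r" if h: "adjL Ls q r" "q \<notin> {a,b}" "r \<notin> {a,b}" for q r
  proof -
    obtain k u0 v0 where k: "k < length Ls" "Ls!k = u0 @ [q,r] @ v0"
      using h(1) unfolding adjL_def by blast
    then have "Ls'!k = filter (\<lambda>q. q \<notin> {a,b}) u0 @ [q,r] @ filter (\<lambda>q. q \<notin> {a,b}) v0"
      unfolding Ls'_def using h(2,3) by simp
    then show ?thesis unfolding adjL_def Ls'_def using k by (metis length_map)
  qed
qed



definition st2 :: "nat \<Rightarrow> (nat \<times> nat) aff" where
  "st2 i = avar (i, 1) + avar (i, 2)"

definition Kw :: "(nat \<times> bool \<Rightarrow> int) \<Rightarrow> (nat \<times> bool) list list \<Rightarrow> nat \<Rightarrow> int" where
  "Kw f Ls c = pr f Ls (c, True) - pr f Ls (c, False) - f (c, False)"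

definition kw :: "(nat \<times> bool \<Rightarrow> int) \<Rightarrow> (nat \<times> bool) list list \<Rightarrow> nat \<Rightarrow> (nat \<times> nat) aff" where
  "kw f Ls c = st2 (ci Ls (c, True)) - st2 (ci Ls (c, False)) + aconst (Kw f Ls c)"

definition TT :: "(nat \<Rightarrow> int) \<Rightarrow> (nat \<times> bool \<Rightarrow> int) \<Rightarrow> (nat \<times> bool) list list \<Rightarrow> nat
    \<Rightarrow> (nat \<times> nat) mono \<Rightarrow> int" where
  "TT s f Ls c m = s c * ((if m = mono (ci Ls (c, True)) (kw f Ls c) then 1 else 0) - (if m = None then 1 else 0))"

definition good :: "(nat \<times> bool) list list \<Rightarrow> bool" where
  "good Ls \<longleftrightarrow> distinct (concat Ls) \<and>
     (\<forall>p \<in> set (concat Ls). (fst p, True) \<in> set (concat Ls) \<and> (fst p, False) \<in> set (concat Ls))"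

lemma aconst_add: "aconst (a + b) = (aconst a + aconst b :: 'v aff)"
  by (simp add: aconst_def)

lemma aconst_diff: "aconst (a - b) = (aconst a - aconst b :: 'v aff)"
  by (simp add: aconst_def)

lemma aconst_zero: "aconst 0 = (0 :: 'v aff)"
  by (simp add: aconst_def zero_prod_def)

lemma sum_split_if: "sum_list (map (\<lambda>p. if P p then g p else 0) xs) +
        sum_list (map (\<lambda>p. if P p then 0 else g p) xs) = (sum_list (map g xs) :: int)"
  by (induct xs) auto

lemma babs_bilabel: "babs (bilabel D i j) = klabel D st2 i j"
proof -
  let ?xs = "take j (comps D ! i)"
  have "sum_list (map (\<lambda>p. if is_self D (fst p) then ichg D p else 0) ?xs) +
        sum_list (map (\<lambda>p. if is_self D (fst p) then 0 else ichg D p) ?xs) =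
        sum_list (map (ichg D) ?xs)"
    by (rule sum_split_if)
  then show ?thesis
    unfolding babs_def bilabel_def klabel_def st2_def
    by (simp add: aconst_add[symmetric] algebra_simps)
qed

lemma cweight_kweight: "cweight D c = kweight D st2 c"
  unfolding cweight_def kweight_def babs_bilabel by (simp add: case_prod_beta)

lemma count_distinct: "(\<forall>x \<in> set xs. count_list xs x = 1) \<Longrightarrow> distinct xs"
proof (induct xs)
  case Nil then show ?case by simp
next
  case (Cons a xs)
  have "a \<notin> set xs"
  proof
    assume "a \<in> set xs"
    then have "count_list xs a \<noteq> 0" using count_list_0_iff by metis
    then have "count_list xs a \<ge> 1" by simp
    then show False using Cons.prems by simp
  qed
  moreover have "\<forall>x \<in> set xs. count_list xs x = 1"
  proof
    fix x assume x: "x \<in> set xs"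
    then have "x \<noteq> a" using \<open>a \<notin> set xs\<close> by auto
    then show "count_list xs x = 1" using Cons.prems x by auto
  qed
  ultimately show ?case using Cons.hyps by simp
qed

lemma wf_good: "wf_gd D \<Longrightarrow> good (comps D)"
proof -
  assume w: "wf_gd D"
  let ?xs = "concat (comps D)"
  have mem: "(c, b) \<in> set ?xs" if "c \<in> crossings D" for c b
  proof -
    have "count_list ?xs (c, b) = 1" using w that unfolding wf_gd_def by (cases b) auto
    then show ?thesis by (metis count_list_0_iff zero_neq_one)
  qed
  have "\<forall>x \<in> set ?xs. count_list ?xs x = 1"
  proof
    fix x assume "x \<in> set ?xs"
    then have "fst x \<in> crossings D" unfolding crossings_def by auto
    then show "count_list ?xs x = 1" using w unfolding wf_gd_def
      by (cases x; cases "snd x") auto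
  qed
  then have "distinct ?xs" by (rule count_distinct)
  moreover have "\<forall>p \<in> set ?xs. (fst p, True) \<in> set ?xs \<and> (fst p, False) \<in> set ?xs"
    using mem unfolding crossings_def by auto
  ultimately show ?thesis unfolding good_def by simp
qed

lemma pos_char:
  assumes d: "distinct (concat (comps D))" and p: "p \<in> set (concat (comps D))"
  shows "fst (pos D p) = ci (comps D) p" "snd (pos D p) < length (comps D ! ci (comps D) p)"
        "comps D ! ci (comps D) p ! snd (pos D p) = p"
proof -
  let ?Ls = "comps D"
  obtain i where i: "i < length ?Ls" "p \<in> set (?Ls!i)" using in_concat_nth[OF p] by blast
  then obtain j where j: "j < length (?Ls!i)" "?Ls!i!j = p" by (metis in_set_conv_nth)
  let ?P = "\<lambda>ij. fst ij < length ?Ls \<and> snd ij < length (?Ls ! fst ij) \<and> ?Ls ! fst ij ! snd ij = p"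
  have "?P (i, j)" using i j by simp
  then have P: "?P (pos D p)" unfolding pos_def by (rule someI)
  then have "p \<in> set (?Ls ! fst (pos D p))" by (metis nth_mem)
  then have c: "ci ?Ls p = fst (pos D p)" using ci_eq[OF d] P by blast
  show "fst (pos D p) = ci (comps D) p" using c by simp
  show "snd (pos D p) < length (comps D ! ci (comps D) p)"
        "comps D ! ci (comps D) p ! snd (pos D p) = p" using P c by auto
qed

lemma take_tw:
  assumes "distinct l" "j < length l" "l!j = p"
  shows "take j l = takeWhile (\<lambda>q. q \<noteq> p) l" "take (Suc j) l = takeWhile (\<lambda>q. q \<noteq> p) l @ [p]"
proof -
  have e: "l = take j l @ p # drop (Suc j) l" using id_take_nth_drop[OF assms(2)] assms(3) by simp
  have "p \<notin> set (take j l)"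
  proof
    assume "p \<in> set (take j l)"
    then obtain k where "k < j" "l!k = p" using assms(2) by (auto simp: in_set_conv_nth)
    then show False using assms nth_eq_iff_index_eq by fastforce
  qed
  then have "takeWhile (\<lambda>q. q \<noteq> p) l = take j l"
    by (subst e) (simp add: tw_notin)
  then show "take j l = takeWhile (\<lambda>q. q \<noteq> p) l" by simp
  show "take (Suc j) l = takeWhile (\<lambda>q. q \<noteq> p) l @ [p]"
    using \<open>takeWhile (\<lambda>q. q \<noteq> p) l = take j l\<close> assms by (simp add: take_Suc_conv_app_nth)
qed

lemma sum_pos:
  assumes d: "distinct (concat (comps D))" and p: "p \<in> set (concat (comps D))"
  shows "sum_list (map f (take (snd (pos D p)) (comps D ! fst (pos D p)))) = pr f (comps D) p"
        "sum_list (map f (take (Suc (snd (pos D p))) (comps D ! fst (pos D p)))) = pr f (comps D) p + f p"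
proof -
  let ?Ls = "comps D"
  note pc = pos_char[OF d p]
  have ci: "ci ?Ls p < length ?Ls"
    using p in_concat_nth ci_eq[OF d] by metis
  have dl: "distinct (?Ls ! ci ?Ls p)" using dc_nth[OF d ci] .
  note tt = take_tw[OF dl pc(2) pc(3)]
  show "sum_list (map f (take (snd (pos D p)) (comps D ! fst (pos D p)))) = pr f (comps D) p"
    unfolding pc(1) tt pr_def ..
  show "sum_list (map f (take (Suc (snd (pos D p))) (comps D ! fst (pos D p)))) = pr f (comps D) p + f p"
    unfolding pc(1) tt pr_def by simp
qed

lemma kweight_kw:
  assumes d: "distinct (concat (comps D))" and cT: "(c, True) \<in> set (concat (comps D))"
    and cF: "(c, False) \<in> set (concat (comps D))"
  shows "kweight D st c = st (ci (comps D) (c, True)) - st (ci (comps D) (c, False))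
            + aconst (Kw (ichg D) (comps D) c)"
proof -
  obtain i j where ij: "pos D (c, True) = (i, j)" by (cases "pos D (c, True)")
  obtain i' j' where ij': "pos D (c, False) = (i', j')" by (cases "pos D (c, False)")
  have "kweight D st c = klabel D st i j - klabel D st i' (Suc j')"
    unfolding kweight_def ij ij' by simp
  also have "\<dots> = st i + aconst (pr (ichg D) (comps D) (c, True)) -
      (st i' + aconst (pr (ichg D) (comps D) (c, False) + ichg D (c, False)))"
    unfolding klabel_def using sum_pos[OF d cT, of "ichg D"] sum_pos[OF d cF, of "ichg D"] ij ij' by simp
  also have "\<dots> = st (ci (comps D) (c, True)) - st (ci (comps D) (c, False))
            + aconst (Kw (ichg D) (comps D) c)"
    using pos_char(1)[OF d cT] pos_char(1)[OF d cF] ij ij'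
    by (simp add: Kw_def aconst_diff aconst_add algebra_simps)
  finally show ?thesis .
qed

lemma mvaip_TT:
  assumes g: "good (comps D)"
  shows "mvaip D = (\<lambda>m. \<Sum>c \<in> crossings D. TT (sg D) (ichg D) (comps D) c m)"
proof
  fix m
  have d: "distinct (concat (comps D))" using g good_def by blast
  show "mvaip D m = (\<Sum>c \<in> crossings D. TT (sg D) (ichg D) (comps D) c m)"
    unfolding mvaip_def
  proof (rule sum.cong[OF refl])
    fix c assume "c \<in> crossings D"
    then obtain p where p: "p \<in> set (concat (comps D))" "fst p = c" unfolding crossings_def by blast
    then have cT: "(c, True) \<in> set (concat (comps D))" and cF: "(c, False) \<in> set (concat (comps D))"
      using g unfolding good_def by force+
    have oc: "over_comp D c = ci (comps D) (c, True)"
      unfolding over_comp_def comp_of_def using pos_char(1)[OF d cT] .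
    have "cweight D c = kw (ichg D) (comps D) c"
      unfolding cweight_kweight kweight_kw[OF d cT cF] kw_def ..
    then show "sg D c * ((if m = mono (over_comp D c) (cweight D c) then 1 else 0) - (if m = None then 1 else 0))
       = TT (sg D) (ichg D) (comps D) c m"
      unfolding TT_def oc by simp
  qed
qed



lemma TT_cong:
  "ci Ls' (c,True) = ci Ls (c,True) \<Longrightarrow> ci Ls' (c,False) = ci Ls (c,False) \<Longrightarrow>
   Kw f Ls' c = Kw f Ls c \<Longrightarrow> TT s f Ls' c m = TT s f Ls c m"
  by (simp add: TT_def kw_def)

lemma TT_zero:
  "ci Ls (c,True) = ci Ls (c,False) \<Longrightarrow> Kw f Ls c = 0 \<Longrightarrow> TT s f Ls c m = 0"
  by (simp add: TT_def kw_def aconst_zero mono_def)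

lemma fin_cross: "finite (crossings D)"
  unfolding crossings_def by simp

lemma sgu[simp]: "sg (D\<lparr>comps := x\<rparr>) = sg D" by simp
lemma ichg_upd[simp]: "ichg (D\<lparr>comps := x\<rparr>) = ichg D"
  unfolding ichg_def sgu ..

lemma adjacent_adjL: "adjacent D p q = adjL (comps D) p q"
  unfolding adjacent_def adjL_def by simp

lemma good_filter:
  assumes g: "good Ls"
  shows "good (map (filter (\<lambda>q. fst q \<notin> S)) Ls)"
proof -
  have c: "concat (map (filter (\<lambda>q. fst q \<notin> S)) Ls) = filter (\<lambda>q. fst q \<notin> S) (concat Ls)"
    by (simp add: filter_concat)
  show ?thesis using g unfolding good_def c by (auto simp del: set_concat)
qed

lemma cross_filter:
  "fst ` set (concat (map (filter (\<lambda>q. fst q \<notin> S)) Ls)) = fst ` set (concat Ls) - S"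
proof -
  have c: "concat (map (filter (\<lambda>q. fst q \<notin> S)) Ls) = filter (\<lambda>q. fst q \<notin> S) (concat Ls)"
    by (simp add: filter_concat)
  show ?thesis unfolding c by auto
qed

lemma R1_inv:
  assumes r: "R1_remove A B"
  shows "mvaip A = mvaip B"
proof -
  let ?Ls = "comps A"
  let ?f = "ichg A"
  have w: "wf_gd A" using r R1_remove_def by blast
  have g: "good ?Ls" using wf_good[OF w] .
  have d: "distinct (concat ?Ls)" using g good_def by blast
  obtain c b where ad: "adjacent A (c, b) (c, \<not> b)" and B: "B = delete_crossings {c} A"
    using r R1_remove_def by blast
  have adL: "adjL ?Ls (c, b) (c, \<not> b)" using ad adjacent_adjL by simp
  have s0: "?f (c, b) + ?f (c, \<not> b) = 0" unfolding ichg_def by (cases b) auto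
  define Ls' where "Ls' = map (filter (\<lambda>q. q \<notin> {(c, b), (c, \<not> b)})) ?Ls"
  have fe: "(\<lambda>q. fst q \<notin> {c}) = (\<lambda>q. q \<notin> {(c, b), (c, \<not> b)})"
  proof
    fix q :: "nat \<times> bool" show "(fst q \<notin> {c}) = (q \<notin> {(c, b), (c, \<not> b)})"
      by (cases q) auto
  qed
  have cB: "comps B = Ls'" unfolding B delete_crossings_def Ls'_def fe by simp
  have sB: "sg B = sg A" "ichg B = ichg A" unfolding B delete_crossings_def by (rule sgu, rule ichg_upd)
  note ds = del_step[OF d adL s0, folded Ls'_def]
  have cBf: "comps B = map (filter (\<lambda>q. fst q \<notin> {c})) ?Ls" unfolding B delete_crossings_def by simp
  have gB: "good (comps B)" using good_filter[OF g, of "{c}"] unfolding B delete_crossings_def by simp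
  have crB: "crossings B = crossings A - {c}"
    unfolding crossings_def cBf by (rule cross_filter)
  obtain i u v where i: "i < length ?Ls" "?Ls!i = u @ [(c, b), (c, \<not> b)] @ v"
    using adL unfolding adjL_def by blast
  have "?Ls!i \<in> set ?Ls" using i(1) by simp
  moreover have "(c,b) \<in> set (?Ls!i)" by (simp add: i(2))
  ultimately have "(c,b) \<in> set (concat ?Ls)" by (simp only: set_concat) blast
  then have cA: "c \<in> crossings A" unfolding crossings_def by (metis fst_conv image_eqI)
  note pa = pr_pair(1,2)[OF d i]
  note pb = pr_pair(3,4)[OF d i, of "ichg A"]
  have ci: "ci ?Ls (c, True) = ci ?Ls (c, False)" using pa by (cases b) auto
  have K: "Kw ?f ?Ls c = 0" using pb s0 unfolding Kw_def by (cases b) auto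
  show ?thesis
  proof
    fix m
    have "mvaip A m = (\<Sum>c' \<in> crossings A. TT (sg A) ?f ?Ls c' m)" using mvaip_TT[OF g] by simp
    also have "\<dots> = TT (sg A) ?f ?Ls c m + (\<Sum>c' \<in> crossings B. TT (sg A) ?f ?Ls c' m)"
      unfolding crB using sum.remove[OF fin_cross cA] by blast
    also have "\<dots> = (\<Sum>c' \<in> crossings B. TT (sg A) ?f ?Ls c' m)" using TT_zero[OF ci K] by simp
    also have "\<dots> = (\<Sum>c' \<in> crossings B. TT (sg B) (ichg B) (comps B) c' m)"
    proof (rule sum.cong[OF refl])
      fix c' assume c': "c' \<in> crossings B"
      then obtain p where p: "p \<in> set (concat (comps B))" "fst p = c'" unfolding crossings_def by blast
      then have pT: "(c', True) \<in> set (concat Ls')" and pF: "(c', False) \<in> set (concat Ls')"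
        using gB cB unfolding good_def by force+
      show "TT (sg A) ?f ?Ls c' m = TT (sg B) (ichg B) (comps B) c' m"
        unfolding sB cB
        using TT_cong[of Ls' c' ?Ls ?f] ds(4)[OF pT] ds(4)[OF pF] by (simp add: Kw_def)
    qed
    also have "\<dots> = mvaip B m" using mvaip_TT[OF gB] by simp
    finally show "mvaip A m = mvaip B m" .
  qed
qed



lemma TT_pair_cancel:
  assumes "s c = - s d" "ci Ls (c,True) = ci Ls (d,True)" "ci Ls (c,False) = ci Ls (d,False)"
    "Kw f Ls c = Kw f Ls d"
  shows "TT s f Ls c m + TT s f Ls d m = 0"
  using assms by (simp add: TT_def kw_def algebra_simps)

lemma R2_inv:
  assumes r: "R2_remove A B"
  shows "mvaip A = mvaip B"
proof -
  let ?Ls = "comps A"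
  let ?f = "ichg A"
  have w: "wf_gd A" using r R2_remove_def by blast
  have g: "good ?Ls" using wf_good[OF w] .
  have d: "distinct (concat ?Ls)" using g good_def by blast
  obtain c d where cd: "c \<noteq> d" "sg A c = - sg A d" and adT: "adjacent A (c, True) (d, True)"
    and adF: "adjacent A (c, False) (d, False) \<or> adjacent A (d, False) (c, False)"
    and B: "B = delete_crossings {c, d} A"
    using r R2_remove_def by blast
  obtain a2 b2 where ab2: "adjL ?Ls a2 b2"
    and ab2c: "(a2 = (c, False) \<and> b2 = (d, False)) \<or> (a2 = (d, False) \<and> b2 = (c, False))"
    using adF adjacent_adjL by blast
  have adLT: "adjL ?Ls (c, True) (d, True)" using adT adjacent_adjL by simp
  have s1: "?f (c, True) + ?f (d, True) = 0" using cd unfolding ichg_def by simp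
  have s2: "?f a2 + ?f b2 = 0" using cd ab2c unfolding ichg_def by auto
  define Ls1 where "Ls1 = map (filter (\<lambda>q. q \<notin> {(c, True), (d, True)})) ?Ls"
  note ds1 = del_step[OF d adLT s1, folded Ls1_def]
  have adj1: "adjL Ls1 a2 b2" using ds1(5)[OF ab2] ab2c by auto
  define Ls2 where "Ls2 = map (filter (\<lambda>q. q \<notin> {a2, b2})) Ls1"
  note ds2 = del_step[OF ds1(1) adj1 s2, folded Ls2_def]
  have cBf: "comps B = map (filter (\<lambda>q. fst q \<notin> {c, d})) ?Ls" unfolding B delete_crossings_def by simp
  have eqP: "(\<lambda>q. q \<notin> {(c, True), (d, True)} \<and> q \<notin> {a2, b2}) = (\<lambda>q. fst q \<notin> {c, d})"
  proof
    fix q :: "nat \<times> bool"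
    show "(q \<notin> {(c, True), (d, True)} \<and> q \<notin> {a2, b2}) = (fst q \<notin> {c, d})"
      using ab2c by (cases q; cases "snd q") auto
  qed
  have cB: "comps B = Ls2" unfolding cBf Ls2_def Ls1_def map_map o_def filter_filter eqP ..
  have sB: "sg B = sg A" "ichg B = ichg A" unfolding B delete_crossings_def by (rule sgu, rule ichg_upd)
  have gB: "good (comps B)" using good_filter[OF g, of "{c, d}"] cBf by simp
  have crB: "crossings B = crossings A - {c, d}"
    unfolding crossings_def cBf by (rule cross_filter)
  obtain i u v where i: "i < length ?Ls" "?Ls!i = u @ [(c, True), (d, True)] @ v"
    using adLT unfolding adjL_def by blast
  obtain i' u' v' where i': "i' < length ?Ls" "?Ls!i' = u' @ [a2, b2] @ v'"
    using ab2 unfolding adjL_def by blast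
  have mi: "?Ls!i \<in> set ?Ls" using i(1) by simp
  have "(c, True) \<in> set (?Ls!i)" "(d, True) \<in> set (?Ls!i)" by (simp_all add: i(2))
  then have "(c, True) \<in> set (concat ?Ls)" "(d, True) \<in> set (concat ?Ls)"
    using mi by (simp_all only: set_concat) blast+
  then have cA: "c \<in> crossings A" and dA: "d \<in> crossings A"
    unfolding crossings_def by (metis fst_conv image_eqI)+
  note pa = pr_pair(1,2)[OF d i] pr_pair(1,2)[OF d i']
  note pb = pr_pair(3,4)[OF d i, of "ichg A"] pr_pair(3,4)[OF d i', of "ichg A"]
  have ciT: "ci ?Ls (c, True) = ci ?Ls (d, True)" using pa by simp
  have ciF: "ci ?Ls (c, False) = ci ?Ls (d, False)" using pa ab2c by auto
  have K: "Kw ?f ?Ls c = Kw ?f ?Ls d"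
    using ab2c
  proof
    assume h: "a2 = (c, False) \<and> b2 = (d, False)"
    show ?thesis using pb h cd unfolding Kw_def ichg_def by simp
  next
    assume h: "a2 = (d, False) \<and> b2 = (c, False)"
    show ?thesis using pb h cd unfolding Kw_def ichg_def by simp
  qed
  have cancel: "TT (sg A) ?f ?Ls c m + TT (sg A) ?f ?Ls d m = 0" for m
    by (rule TT_pair_cancel[OF cd(2) ciT ciF K])
  show ?thesis
  proof
    fix m
    have fin: "finite (crossings A)" by (rule fin_cross)
    have "mvaip A m = (\<Sum>c' \<in> crossings A. TT (sg A) ?f ?Ls c' m)" using mvaip_TT[OF g] by simp
    also have "\<dots> = TT (sg A) ?f ?Ls c m + (\<Sum>c' \<in> crossings A - {c}. TT (sg A) ?f ?Ls c' m)"
      using sum.remove[OF fin cA] by blast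
    also have "(\<Sum>c' \<in> crossings A - {c}. TT (sg A) ?f ?Ls c' m) =
        TT (sg A) ?f ?Ls d m + (\<Sum>c' \<in> crossings A - {c} - {d}. TT (sg A) ?f ?Ls c' m)"
      using sum.remove[of "crossings A - {c}" d] fin dA cd(1) by simp
    also have "crossings A - {c} - {d} = crossings B" using crB by auto
    finally have "mvaip A m = (\<Sum>c' \<in> crossings B. TT (sg A) ?f ?Ls c' m)"
      using cancel[of m] by simp
    also have "\<dots> = (\<Sum>c' \<in> crossings B. TT (sg B) (ichg B) (comps B) c' m)"
    proof (rule sum.cong[OF refl])
      fix c' assume c': "c' \<in> crossings B"
      then obtain p where p: "p \<in> set (concat (comps B))" "fst p = c'" unfolding crossings_def by blast
      then have pT: "(c', True) \<in> set (concat Ls2)" and pF: "(c', False) \<in> set (concat Ls2)"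
        using gB cB unfolding good_def by force+
      have pT1: "(c', True) \<in> set (concat Ls1)" and pF1: "(c', False) \<in> set (concat Ls1)"
        using pT pF ds2(2) by auto
      show "TT (sg A) ?f ?Ls c' m = TT (sg B) (ichg B) (comps B) c' m"
        unfolding sB cB
        using TT_cong[of Ls2 c' ?Ls ?f] ds2(4)[OF pT] ds2(4)[OF pF] ds1(4)[OF pT1] ds1(4)[OF pF1]
        by (simp add: Kw_def)
    qed
    also have "\<dots> = mvaip B m" using mvaip_TT[OF gB] by simp
    finally show "mvaip A m = mvaip B m" .
  qed
qed



definition dl :: "('a \<Rightarrow> int) \<Rightarrow> 'a \<Rightarrow> 'a \<Rightarrow> 'a \<Rightarrow> int" where
  "dl f a b p = (if p = a then f b else if p = b then - f a else 0)"

lemma R3_arith: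
  fixes sg :: "nat \<Rightarrow> int" and s :: int
  assumes dx: "distinct [x, y, z]" and s: "s \<in> {1, -1}"
    and o1: "(if C1 then 1 else -1) = s * sg z"
    and o2: "(if C2 then 1 else -1) = - s * sg y"
    and o3: "(if C3 then 1 else -1) = s * sg x"
  defines "f \<equiv> (\<lambda>p::nat \<times> bool. if snd p then - sg (fst p) else sg (fst p))"
  shows "dl f (if C1 then (x,True) else (y,True)) (if C1 then (y,True) else (x,True)) (c,True)
       + dl f (if C2 then (z,True) else (x,False)) (if C2 then (x,False) else (z,True)) (c,True)
       + dl f (if C3 then (y,False) else (z,False)) (if C3 then (z,False) else (y,False)) (c,True)
       = dl f (if C1 then (x,True) else (y,True)) (if C1 then (y,True) else (x,True)) (c,False)
       + dl f (if C2 then (z,True) else (x,False)) (if C2 then (x,False) else (z,True)) (c,False)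
       + dl f (if C3 then (y,False) else (z,False)) (if C3 then (z,False) else (y,False)) (c,False)"
proof -
  have ne: "x \<noteq> y" "x \<noteq> z" "y \<noteq> z" "y \<noteq> x" "z \<noteq> x" "z \<noteq> y" using dx by auto
  have s': "s = 1 \<or> s = -1" using s by auto
  have A: "(if C1 then - sg y else sg y) = (if C2 then sg z else - sg z)"
    using o1 o2 s' by (cases C1; cases C2) auto
  have Bq: "(if C1 then sg x else - sg x) = (if C3 then sg z else - sg z)"
    using o1 o3 s' by (cases C1; cases C3) auto
  have Cq: "(if C2 then - sg x else sg x) = (if C3 then sg y else - sg y)"
    using o2 o3 s' by (cases C2; cases C3) auto
  consider "c = x" | "c = y" | "c = z" | "c \<notin> {x, y, z}" by blast
  then show ?thesis
  proof cases
    case 1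
    then show ?thesis using A ne unfolding dl_def f_def by (cases C1; cases C2; cases C3) simp_all
  next
    case 2
    then show ?thesis using Bq ne unfolding dl_def f_def by (cases C1; cases C2; cases C3) simp_all
  next
    case 3
    then show ?thesis using Cq ne unfolding dl_def f_def by (cases C1; cases C2; cases C3) simp_all
  next
    case 4
    then show ?thesis unfolding dl_def f_def by simp
  qed
qed



lemma R3_inv:
  assumes r: "R3 A B"
  shows "mvaip A = mvaip B"
proof -
  let ?Ls = "comps A"
  let ?f = "ichg A"
  have w: "wf_gd A" using r R3_def by blast
  have g: "good ?Ls" using wf_good[OF w] .
  have d: "distinct (concat ?Ls)" using g good_def by blast
  obtain x y z s where dx: "distinct [x, y, z]"
    and j1: "adjacent A (x, True) (y, True) \<or> adjacent A (y, True) (x, True)"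
    and j2: "adjacent A (z, True) (x, False) \<or> adjacent A (x, False) (z, True)"
    and j3: "adjacent A (y, False) (z, False) \<or> adjacent A (z, False) (y, False)"
    and s: "s \<in> {1, -1::int}"
    and o1: "ord_sign A (x, True) (y, True) = s * sg A z"
    and o2: "ord_sign A (z, True) (x, False) = - s * sg A y"
    and o3: "ord_sign A (y, False) (z, False) = s * sg A x"
    and B: "B = A\<lparr>comps := map (\<lambda>l.
               let l1 = (if adjacent A (x, True) (y, True) then swap_adj (x, True) (y, True) l
                         else swap_adj (y, True) (x, True) l);
                   l2 = (if adjacent A (z, True) (x, False) then swap_adj (z, True) (x, False) l1
                         else swap_adj (x, False) (z, True) l1)
               in (if adjacent A (y, False) (z, False) then swap_adj (y, False) (z, False) l2
                   else swap_adj (z, False) (y, False) l2)) (comps A)\<rparr>"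
    using r unfolding R3_def by blast
  define C1 where "C1 = adjacent A (x, True) (y, True)"
  define C2 where "C2 = adjacent A (z, True) (x, False)"
  define C3 where "C3 = adjacent A (y, False) (z, False)"
  define a1 where "a1 = (if C1 then (x,True) else (y,True))"
  define b1 where "b1 = (if C1 then (y,True) else (x,True))"
  define a2 where "a2 = (if C2 then (z,True) else (x,False))"
  define b2 where "b2 = (if C2 then (x,False) else (z,True))"
  define a3 where "a3 = (if C3 then (y,False) else (z,False))"
  define b3 where "b3 = (if C3 then (z,False) else (y,False))"
  have ne: "x \<noteq> y" "x \<noteq> z" "y \<noteq> z" using dx by auto
  have ad1: "adjL ?Ls a1 b1" using j1 unfolding a1_def b1_def C1_def adjacent_adjL by auto
  have ad2: "adjL ?Ls a2 b2" using j2 unfolding a2_def b2_def C2_def adjacent_adjL by auto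
  have ad3: "adjL ?Ls a3 b3" using j3 unfolding a3_def b3_def C3_def adjacent_adjL by auto
  define Ls1 where "Ls1 = map (swap_adj a1 b1) ?Ls"
  define Ls2 where "Ls2 = map (swap_adj a2 b2) Ls1"
  define Ls3 where "Ls3 = map (swap_adj a3 b3) Ls2"
  have cB: "comps B = Ls3"
    unfolding B Ls3_def Ls2_def Ls1_def a1_def b1_def a2_def b2_def a3_def b3_def
      C1_def[symmetric] C2_def[symmetric] C3_def[symmetric]
    by (cases C1; cases C2; cases C3) (simp_all add: Let_def)
  have sB: "sg B = sg A" "ichg B = ichg A" unfolding B by (rule sgu, rule ichg_upd)
  note ss1 = swap_step[OF d ad1, folded Ls1_def]
  have ad2': "adjL Ls1 a2 b2"
    by (rule ss1(6)[OF ad2]) (use ne in \<open>auto simp: a1_def b1_def a2_def b2_def\<close>)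
  note ss2 = swap_step[OF ss1(1) ad2', folded Ls2_def]
  have ad3': "adjL Ls2 a3 b3"
  proof (rule ss2(6))
    show "adjL Ls1 a3 b3"
      by (rule ss1(6)[OF ad3]) (use ne in \<open>auto simp: a1_def b1_def a3_def b3_def\<close>)
  qed (use ne in \<open>auto simp: a2_def b2_def a3_def b3_def\<close>)
  note ss3 = swap_step[OF ss2(1) ad3', folded Ls3_def]
  have set3: "set (concat Ls3) = set (concat ?Ls)" using ss1(2) ss2(2) ss3(2) by simp
  have ci3: "ci Ls3 = ci ?Ls" using ss1(3) ss2(3) ss3(3) by simp
  have pr3: "pr f Ls3 p = pr f ?Ls p + dl f a1 b1 p + dl f a2 b2 p + dl f a3 b3 p"
    if p: "p \<in> set (concat ?Ls)" for f p
  proof -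
    have p1: "p \<in> set (concat Ls1)" using p ss1(2) by simp
    have p2: "p \<in> set (concat Ls2)" using p1 ss2(2) by simp
    show ?thesis using ss1(5)[OF p, of f] ss2(5)[OF p1, of f] ss3(5)[OF p2, of f]
      unfolding dl_def by simp
  qed
  have gB: "good (comps B)" using g ss3(1) set3 cB unfolding good_def by simp
  have crB: "crossings B = crossings A" unfolding crossings_def cB set3 ..
  have ar: "dl ?f a1 b1 (c,True) + dl ?f a2 b2 (c,True) + dl ?f a3 b3 (c,True)
      = dl ?f a1 b1 (c,False) + dl ?f a2 b2 (c,False) + dl ?f a3 b3 (c,False)" for c
  proof -
    have o1': "(if C1 then 1 else -1) = s * sg A z" using o1 unfolding ord_sign_def C1_def .
    have o2': "(if C2 then 1 else -1) = - s * sg A y" using o2 unfolding ord_sign_def C2_def .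
    have o3': "(if C3 then 1 else -1) = s * sg A x" using o3 unfolding ord_sign_def C3_def .
    have fe: "ichg A = (\<lambda>p::nat \<times> bool. if snd p then - sg A (fst p) else sg A (fst p))"
      unfolding ichg_def ..
    show ?thesis
      unfolding a1_def b1_def a2_def b2_def a3_def b3_def fe
      by (rule R3_arith[OF dx s o1' o2' o3'])
  qed
  show ?thesis
  proof
    fix m
    have "mvaip A m = (\<Sum>c \<in> crossings A. TT (sg A) ?f ?Ls c m)" using mvaip_TT[OF g] by simp
    also have "\<dots> = (\<Sum>c \<in> crossings B. TT (sg B) (ichg B) (comps B) c m)"
      unfolding crB
    proof (rule sum.cong[OF refl])
      fix c assume c: "c \<in> crossings A"
      then obtain p where p: "p \<in> set (concat ?Ls)" "fst p = c" unfolding crossings_def by blast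
      then have pT: "(c, True) \<in> set (concat ?Ls)" and pF: "(c, False) \<in> set (concat ?Ls)"
        using g unfolding good_def by force+
      have "Kw ?f Ls3 c = Kw ?f ?Ls c"
        using pr3[OF pT, of ?f] pr3[OF pF, of ?f] ar[of c] unfolding Kw_def by simp
      then show "TT (sg A) ?f ?Ls c m = TT (sg B) (ichg B) (comps B) c m"
        unfolding sB cB using TT_cong[of Ls3 c ?Ls ?f] ci3 by simp
    qed
    also have "\<dots> = mvaip B m" using mvaip_TT[OF gB] by simp
    finally show "mvaip A m = mvaip B m" .
  qed
qed



lemma mono_exp_mono: "mono_exp (mono k w) = w"
  unfolding mono_exp_def mono_def by simp

lemma spec_mvaip:
  "specialize (mvaip D) = (\<lambda>e. \<Sum>c \<in> crossings D. sg D c *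
       ((if e = cweight D c then 1 else 0) - (if e = 0 then 1 else 0)))"
proof
  fix e
  let ?M = "\<lambda>c. mono (over_comp D c) (cweight D c)"
  let ?F = "insert None (?M ` crossings D)"
  let ?F' = "{m \<in> ?F. mono_exp m = e}"
  let ?P = "mvaip D"
  have finF: "finite ?F" using fin_cross by simp
  have finF': "finite ?F'" using finF by simp
  have supp: "?P m = 0" if "m \<notin> ?F" for m
    using that unfolding mvaip_def by (intro sum.neutral) auto
  have "specialize ?P e = (\<Sum>m \<in> {m. ?P m \<noteq> 0 \<and> mono_exp m = e}. ?P m)"
    unfolding specialize_def ..
  also have "\<dots> = (\<Sum>m \<in> ?F'. ?P m)"
  proof (rule sum.mono_neutral_left[OF finF'])
    have supp': "m \<in> ?F" if "?P m \<noteq> 0" for m using supp that by blast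
    show "{m. ?P m \<noteq> 0 \<and> mono_exp m = e} \<subseteq> ?F'" using supp' by blast
    show "\<forall>i\<in>?F' - {m. ?P m \<noteq> 0 \<and> mono_exp m = e}. ?P i = 0" by blast
  qed
  also have "\<dots> = (\<Sum>m \<in> ?F'. \<Sum>c \<in> crossings D. sg D c *
       ((if m = ?M c then 1 else 0) - (if m = None then 1 else 0)))"
    unfolding mvaip_def ..
  also have "\<dots> = (\<Sum>c \<in> crossings D. \<Sum>m \<in> ?F'. sg D c *
       ((if m = ?M c then 1 else 0) - (if m = None then 1 else 0)))"
    by (rule sum.swap)
  also have "\<dots> = (\<Sum>c \<in> crossings D. sg D c *
       ((if e = cweight D c then 1 else 0) - (if e = 0 then 1 else 0)))"
  proof (rule sum.cong[OF refl])
    fix c assume c: "c \<in> crossings D"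
    have "(\<Sum>m \<in> ?F'. sg D c * ((if m = ?M c then 1 else 0) - (if m = None then 1 else 0)))
        = sg D c * ((\<Sum>m \<in> ?F'. (if m = ?M c then 1 else 0)) - (\<Sum>m \<in> ?F'. (if m = None then 1 else 0)))"
      by (simp add: sum_distrib_left sum_subtractf right_diff_distrib)
    also have "(\<Sum>m \<in> ?F'. (if m = ?M c then 1 else 0)) = (if ?M c \<in> ?F' then 1 else (0::int))"
      using sum.delta'[OF finF', of "?M c" "\<lambda>_. 1::int"] by (simp add: eq_commute)
    also have "(\<Sum>m \<in> ?F'. (if m = None then 1 else 0)) = (if None \<in> ?F' then 1 else (0::int))"
      using sum.delta'[OF finF', of None "\<lambda>_. 1::int"] by (simp add: eq_commute)
    also have "(?M c \<in> ?F') = (e = cweight D c)" using c by (auto simp: mono_exp_mono)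
    also have "(None \<in> ?F') = (e = 0)" by (auto simp: mono_exp_def)
    finally show "(\<Sum>m \<in> ?F'. sg D c * ((if m = ?M c then 1 else 0) - (if m = None then 1 else 0)))
       = sg D c * ((if e = cweight D c then 1 else 0) - (if e = 0 then 1 else 0))" .
  qed
  finally show "specialize ?P e = (\<Sum>c \<in> crossings D. sg D c *
       ((if e = cweight D c then 1 else 0) - (if e = 0 then 1 else 0)))" .
qed

lemma st2_eq: "(\<lambda>i. avar (i, 1) + avar (i, 2)) = st2"
  unfolding st2_def ..

lemma part2: "specialize (mvaip D) = kauffman_P D (\<lambda>i. avar (i, 1) + avar (i, 2))"
  unfolding spec_mvaip kauffman_P_def st2_eq cweight_kweight ..

lemma kweight_same:
  assumes "fst (pos D (c, True)) = fst (pos D (c, False))"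
  shows "kweight D st c = kweight D st' c"
  using assms unfolding kweight_def klabel_def by (simp add: case_prod_beta algebra_simps)

lemma part3:
  assumes w: "wf_gd D" and l: "length (comps D) = 1"
  shows "specialize (mvaip D) = kauffman_P D (\<lambda>_. x)"
proof -
  have g: "good (comps D)" using wf_good[OF w] .
  have d: "distinct (concat (comps D))" using g good_def by blast
  have z: "fst (pos D p) = 0" if p: "p \<in> set (concat (comps D))" for p
  proof -
    obtain k where k: "k < length (comps D)" "p \<in> set (comps D ! k)" using in_concat_nth[OF p] by blast
    have "ci (comps D) p = k" using ci_eq[OF d k] .
    then show ?thesis using pos_char(1)[OF d p] k l by simp
  qed
  have "cweight D c = kweight D (\<lambda>_. x) c" if c: "c \<in> crossings D" for c
  proof -
    obtain p where p: "p \<in> set (concat (comps D))" "fst p = c" using c unfolding crossings_def by blast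
    then have pT: "(c, True) \<in> set (concat (comps D))" and pF: "(c, False) \<in> set (concat (comps D))"
      using g unfolding good_def by force+
    show ?thesis unfolding cweight_kweight by (rule kweight_same) (simp add: z[OF pT] z[OF pF])
  qed
  then show ?thesis unfolding spec_mvaip kauffman_P_def
    by (intro ext sum.cong) auto
qed

theorem proposition4:
  shows "(\<forall>D D'. wf_gd D \<and> compatible D \<and> reid_move D D' \<longrightarrow> mvaip D = mvaip D') \<and>
         (\<forall>D. wf_gd D \<and> compatible D \<longrightarrow>
              specialize (mvaip D) = kauffman_P D (\<lambda>i. avar (i, 1) + avar (i, 2))) \<and>
         (\<forall>D (x :: (nat \<times> nat) aff). wf_gd D \<and> length (comps D) = 1 \<longrightarrow>
              specialize (mvaip D) = kauffman_P D (\<lambda>_. x))"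
proof (intro conjI allI impI)
  fix D D' assume h: "wf_gd D \<and> compatible D \<and> reid_move D D'"
  then have "reid_move D D'" by simp
  then show "mvaip D = mvaip D'"
    unfolding reid_move_def using R1_inv R2_inv R3_inv by metis
next
  fix D show "specialize (mvaip D) = kauffman_P D (\<lambda>i. avar (i, 1) + avar (i, 2))" by (rule part2)
next
  fix D and x :: "(nat \<times> nat) aff"
  assume "wf_gd D \<and> length (comps D) = 1"
  then show "specialize (mvaip D) = kauffman_P D (\<lambda>_. x)" using part3 by blast
qed

end
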